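(* Let $(X,d_X)$ be an ultrametric space and $(Y,d_Y)$, $(Z,d_Z)$ be metric spaces. Let $f:X\to Y$ be a full function, let $L>0$, let $g:Y\to Z$ be Lipschitz with constant $L$ and $h:Z\to X$ be Lipschitz with constant $L$. Then $g\circ f$ is full, and if $d_Z$ is an ultrametric then $f\circ h$ is also full. The same holds with "full" replaced everywhere by "$\omega$-full".
   Context: For an ultrametric space $(W,d_W)$, a set $A\subseteq W$ is full with constant $r>0$ if $B(x,r)=\{y\in W:d_W(x,y)<r\}\subseteq A$ for every $x\in A$, and full if it is full with some constant. A function $f$ from an ultrametric space $W$ to a space $V$ is full if it takes finitely many values and the preimage of each value is a full set; it is $\omega$-full if it takes at most countably many values and there is a single $r>0$ such that the preimage of each value is full with constant $r$. A function $g:(Y,d_Y)\to(Z,d_Z)$ is Lipschitz with constant $L$ if $d_Z(g(y),g(y'))\le L\,d_Y(y,y')$ for all $y,y'$. *)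

theory Defs
  imports "HOL-Analysis.Analysis"
begin

definition ultrametric :: "'a set \<Rightarrow> ('a \<Rightarrow> 'a \<Rightarrow> real) \<Rightarrow> bool" where
  "ultrametric W d \<longleftrightarrow> Metric_space W d \<and>
     (\<forall>x\<in>W. \<forall>y\<in>W. \<forall>z\<in>W. d x z \<le> max (d x y) (d y z))"

definition full_set_with :: "'a set \<Rightarrow> ('a \<Rightarrow> 'a \<Rightarrow> real) \<Rightarrow> real \<Rightarrow> 'a set \<Rightarrow> bool" where
  "full_set_with W d r A \<longleftrightarrow> (\<forall>x\<in>A. {y\<in>W. d x y < r} \<subseteq> A)"

definition full_set :: "'a set \<Rightarrow> ('a \<Rightarrow> 'a \<Rightarrow> real) \<Rightarrow> 'a set \<Rightarrow> bool" where
  "full_set W d A \<longleftrightarrow> (\<exists>r>0. full_set_with W d r A)"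

definition full_fun :: "'a set \<Rightarrow> ('a \<Rightarrow> 'a \<Rightarrow> real) \<Rightarrow> ('a \<Rightarrow> 'b) \<Rightarrow> bool" where
  "full_fun W d f \<longleftrightarrow> finite (f ` W) \<and>
     (\<forall>v\<in>f ` W. full_set W d {x\<in>W. f x = v})"

definition omega_full_fun :: "'a set \<Rightarrow> ('a \<Rightarrow> 'a \<Rightarrow> real) \<Rightarrow> ('a \<Rightarrow> 'b) \<Rightarrow> bool" where
  "omega_full_fun W d f \<longleftrightarrow> countable (f ` W) \<and>
     (\<exists>r>0. \<forall>v\<in>f ` W. full_set_with W d r {x\<in>W. f x = v})"

definition lipschitz_with :: "'a set \<Rightarrow> ('a \<Rightarrow> 'a \<Rightarrow> real) \<Rightarrow> ('b \<Rightarrow> 'b \<Rightarrow> real) \<Rightarrow> real \<Rightarrow> ('a \<Rightarrow> 'b) \<Rightarrow> bool" where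
  "lipschitz_with Y dY dZ L g \<longleftrightarrow> (\<forall>y\<in>Y. \<forall>y'\<in>Y. dZ (g y) (g y') \<le> L * dY y y')"

end

theory Submission
  imports Defs
begin

lemma fsw_mono: "full_set_with W d r A \<Longrightarrow> r' \<le> r \<Longrightarrow> full_set_with W d r' A"
  unfolding full_set_with_def by fastforce

lemma full_uniform:
  assumes "full_fun X d f"
  shows "\<exists>r>0. \<forall>v\<in>f ` X. full_set_with X d r {x\<in>X. f x = v}"
proof (cases "f ` X = {}")
  case True then show ?thesis by (intro exI[of _ 1]) auto
next
  case False
  have fin: "finite (f ` X)" using assms unfolding full_fun_def by blast
  define R where "R v = (SOME r. r > 0 \<and> full_set_with X d r {x\<in>X. f x = v})" for v
  have R: "R v > 0 \<and> full_set_with X d (R v) {x\<in>X. f x = v}" if "v \<in> f ` X" for v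
  proof -
    have "\<exists>r. r > 0 \<and> full_set_with X d r {x\<in>X. f x = v}"
      using assms that unfolding full_fun_def full_set_def by blast
    then show ?thesis unfolding R_def by (rule someI_ex)
  qed
  define r where "r = Min (R ` f ` X)"
  have "r > 0" unfolding r_def using fin False R by (subst Min_gr_iff) auto
  moreover have "\<forall>v\<in>f ` X. full_set_with X d r {x\<in>X. f x = v}"
  proof
    fix v assume v: "v \<in> f ` X"
    have "r \<le> R v" unfolding r_def using fin v by (intro Min_le) auto
    then show "full_set_with X d r {x\<in>X. f x = v}" using R[OF v] fsw_mono by blast
  qed
  ultimately show ?thesis by blast
qed

lemma comp_left:
  assumes "\<forall>v\<in>f ` X. full_set_with X d r {x\<in>X. f x = v}"
  shows "\<forall>w\<in>(g \<circ> f) ` X. full_set_with X d r {x\<in>X. (g \<circ> f) x = w}"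
  using assms unfolding full_set_with_def by fastforce

lemma comp_right:
  assumes "\<forall>v\<in>f ` X. full_set_with X dX r {x\<in>X. f x = v}" "h ` Z \<subseteq> X"
    "lipschitz_with Z dZ dX L h" "L > 0"
  shows "\<forall>v\<in>(f \<circ> h) ` Z. full_set_with Z dZ (r / L) {z\<in>Z. (f \<circ> h) z = v}"
  unfolding full_set_with_def
proof (intro ballI subsetI)
  fix v z z' assume v: "v \<in> (f \<circ> h) ` Z" and z: "z \<in> {z \<in> Z. (f \<circ> h) z = v}"
    and z': "z' \<in> {y \<in> Z. dZ z y < r / L}"
  have "dX (h z) (h z') \<le> L * dZ z z'" using assms(3) z z' unfolding lipschitz_with_def by auto
  also have "\<dots> < L * (r / L)" using z' assms(4) by (intro mult_strict_left_mono) auto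
  also have "\<dots> = r" using assms(4) by simp
  finally have d: "dX (h z) (h z') < r" .
  have hz: "h z \<in> {x\<in>X. f x = v}" using z assms(2) by auto
  have "f (h z) \<in> f ` X" using hz by auto
  then have "full_set_with X dX r {x\<in>X. f x = f (h z)}" using assms(1) by blast
  then have "h z' \<in> {x\<in>X. f x = v}" using hz d z' assms(2) unfolding full_set_with_def by auto
  then show "z' \<in> {z \<in> Z. (f \<circ> h) z = v}" using z' by auto
qed

theorem mainTheorem9:
  fixes X :: "'x set" and dX :: "'x \<Rightarrow> 'x \<Rightarrow> real"
    and Y :: "'y set" and dY :: "'y \<Rightarrow> 'y \<Rightarrow> real"
    and Z :: "'z set" and dZ :: "'z \<Rightarrow> 'z \<Rightarrow> real"
    and f :: "'x \<Rightarrow> 'y" and g :: "'y \<Rightarrow> 'z" and h :: "'z \<Rightarrow> 'x" and L :: real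
  assumes "ultrametric X dX"
    and "Metric_space Y dY"
    and "Metric_space Z dZ"
    and "f ` X \<subseteq> Y" and "g ` Y \<subseteq> Z" and "h ` Z \<subseteq> X"
    and "L > 0"
    and "lipschitz_with Y dY dZ L g"
    and "lipschitz_with Z dZ dX L h"
  shows "(full_fun X dX f \<longrightarrow>
            full_fun X dX (g \<circ> f) \<and> (ultrametric Z dZ \<longrightarrow> full_fun Z dZ (f \<circ> h)))
       \<and> (omega_full_fun X dX f \<longrightarrow>
            omega_full_fun X dX (g \<circ> f) \<and> (ultrametric Z dZ \<longrightarrow> omega_full_fun Z dZ (f \<circ> h)))"
proof (intro conjI impI)
  assume F: "full_fun X dX f"
  then obtain r where r: "r > 0" "\<forall>v\<in>f ` X. full_set_with X dX r {x\<in>X. f x = v}"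
    using full_uniform by blast
  have fin: "finite (f ` X)" using F unfolding full_fun_def by blast
  have "(g \<circ> f) ` X = g ` (f ` X)" by auto
  then have "finite ((g \<circ> f) ` X)" using fin by simp
  then show "full_fun X dX (g \<circ> f)"
    unfolding full_fun_def full_set_def
    using comp_left[OF r(2), of g] r(1) by blast
  show "full_fun Z dZ (f \<circ> h)"
  proof -
    have "(f \<circ> h) ` Z \<subseteq> f ` X" using assms(6) by auto
    then have "finite ((f \<circ> h) ` Z)" using fin finite_subset by blast
    moreover have "r / L > 0" using r(1) assms(7) by simp
    ultimately show ?thesis unfolding full_fun_def full_set_def
      using comp_right[OF r(2) assms(6) assms(9) assms(7)] by blast
  qed
next
  assume F: "omega_full_fun X dX f"
  then obtain r where r: "r > 0" "\<forall>v\<in>f ` X. full_set_with X dX r {x\<in>X. f x = v}"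
    unfolding omega_full_fun_def by blast
  have c: "countable (f ` X)" using F unfolding omega_full_fun_def by blast
  have "(g \<circ> f) ` X = g ` (f ` X)" by auto
  then have "countable ((g \<circ> f) ` X)" using c by simp
  then show "omega_full_fun X dX (g \<circ> f)"
    unfolding omega_full_fun_def
    using comp_left[OF r(2), of g] r(1) by blast
  show "omega_full_fun Z dZ (f \<circ> h)"
  proof -
    have "(f \<circ> h) ` Z \<subseteq> f ` X" using assms(6) by auto
    then have "countable ((f \<circ> h) ` Z)" using c countable_subset by blast
    moreover have "r / L > 0" using r(1) assms(7) by simp
    ultimately show ?thesis unfolding omega_full_fun_def
      using comp_right[OF r(2) assms(6) assms(9) assms(7)] by blast
  qed
qed

end
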